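(* Let $\mathcal V$ be a finite alphabet, $\mathcal V^*$ the set of finite strings over $\mathcal V$, $e$ an environment and $p$ a probability distribution on test suites $t\in\mathcal V^*$. Let $$\mathrm{sim}_{p,e}(c_1,c_2):=\mathbb E_{t\sim p}\Big[\tfrac{1}{|t|}\sum_{k=1}^{|t|}\mathbf 1\{O_k(c_1,t\mid e)=O_k(c_2,t\mid e)\}\Big]$$ and, for $s\in\mathbb N$, $\mathrm{sim}^s_{p,e}(c_1,c_2):=\mathrm{sim}_{p,e}(c_1,c_2)^s$. Define functional equivalence $$\mathrm{sim}^\infty_{p,e}(c_1,c_2):=\mathbf 1\{O(c_1,t\mid e)=O(c_2,t\mid e)\ \text{for all } t\in\mathcal V^* \text{ with } p(t)>0\}.$$ Then for every $s\in\mathbb N$, $\mathrm{sim}^s_{p,e}$ is a positive semi-definite kernel on $\mathcal V^*$, and for all $c_1,c_2\in\mathcal V^*$, $\lim_{s\to\infty}\mathrm{sim}^s_{p,e}(c_1,c_2)=\mathrm{sim}^\infty_{p,e}(c_1,c_2)$.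
   Context: A test suite $t\in\mathcal V^*$ consists of $|t|\ge 1$ test cases. For an environment $e$, an implementation $c\in\mathcal V^*$ and a test suite $t$, the test harness returns a deterministic output vector $O(c,t\mid e)=(O_1(c,t\mid e),\dots,O_{|t|}(c,t\mid e))\in\mathbb O^{|t|}$ for a set $\mathbb O$ of possible test outputs. *)

theory Defs
  imports "HOL-Probability.Probability"
begin

text \<open>Per-suite agreement fraction: (1/|t|) * #{k in 1..|t|. O_k(c1,t|e) = O_k(c2,t|e)},
  where the output vector O(c,t|e) is the list Out e c t and O_k is its k-th entry (1-based).\<close>
definition agree_frac :: "('e \<Rightarrow> 'v list \<Rightarrow> 'v list \<Rightarrow> 'o list) \<Rightarrow> 'e \<Rightarrow> 'v list \<Rightarrow> 'v list \<Rightarrow> 'v list \<Rightarrow> real" where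
  "agree_frac Out e c1 c2 t =
     (1 / real (length t)) * (\<Sum>k\<in>{1..length t}. if Out e c1 t ! (k - 1) = Out e c2 t ! (k - 1) then 1 else 0)"

definition sim :: "'v list pmf \<Rightarrow> ('e \<Rightarrow> 'v list \<Rightarrow> 'v list \<Rightarrow> 'o list) \<Rightarrow> 'e \<Rightarrow> 'v list \<Rightarrow> 'v list \<Rightarrow> real" where
  "sim p Out e c1 c2 = measure_pmf.expectation p (\<lambda>t. agree_frac Out e c1 c2 t)"

definition sim_pow :: "nat \<Rightarrow> 'v list pmf \<Rightarrow> ('e \<Rightarrow> 'v list \<Rightarrow> 'v list \<Rightarrow> 'o list) \<Rightarrow> 'e \<Rightarrow> 'v list \<Rightarrow> 'v list \<Rightarrow> real" where
  "sim_pow s p Out e c1 c2 = (sim p Out e c1 c2) ^ s"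

definition sim_inf :: "'v list pmf \<Rightarrow> ('e \<Rightarrow> 'v list \<Rightarrow> 'v list \<Rightarrow> 'o list) \<Rightarrow> 'e \<Rightarrow> 'v list \<Rightarrow> 'v list \<Rightarrow> real" where
  "sim_inf p Out e c1 c2 = (if (\<forall>t. pmf p t > 0 \<longrightarrow> Out e c1 t = Out e c2 t) then 1 else 0)"

definition psd_kernel :: "'a set \<Rightarrow> ('a \<Rightarrow> 'a \<Rightarrow> real) \<Rightarrow> bool" where
  "psd_kernel X K \<longleftrightarrow>
     (\<forall>x\<in>X. \<forall>y\<in>X. K x y = K y x) \<and>
     (\<forall>n (x :: nat \<Rightarrow> 'a) (a :: nat \<Rightarrow> real). (\<forall>i<n. x i \<in> X) \<longrightarrow>
        (\<Sum>i<n. \<Sum>j<n. a i * a j * K (x i) (x j)) \<ge> 0)"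

end

theory Submission
  imports Defs
begin

lemma af_bounds: "0 \<le> agree_frac Out e c1 c2 t \<and> agree_frac Out e c1 c2 t \<le> 1"
proof -
  let ?S = "(\<Sum>k\<in>{1..length t}. if Out e c1 t ! (k - 1) = Out e c2 t ! (k - 1) then 1 else 0 :: real)"
  have "?S \<le> (\<Sum>k\<in>{1..length t}. 1)" by (rule sum_mono) auto
  hence S: "?S \<le> real (length t)" by simp
  have S0: "0 \<le> ?S" by (rule sum_nonneg) auto
  show ?thesis
  proof (cases "length t = 0")
    case True thus ?thesis by (simp add: agree_frac_def)
  next
    case False
    thus ?thesis using S S0 by (simp add: agree_frac_def field_simps)
  qed
qed

lemma af_int: "integrable (measure_pmf p) (\<lambda>t. agree_frac Out e c1 c2 t)"
proof (rule measure_pmf.integrable_const_bound[where B=1])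
  show "AE t in measure_pmf p. norm (agree_frac Out e c1 c2 t) \<le> 1"
    by (intro AE_I2) (metis abs_of_nonneg af_bounds real_norm_def)
qed simp

lemma eqker:
  fixes K :: "'a \<Rightarrow> 'a \<Rightarrow> real" and n :: nat
  assumes hK: "\<And>(n::nat) x a. 0 \<le> (\<Sum>i<n. \<Sum>j<n. a i * a j * K (x i) (x j))"
  shows "0 \<le> (\<Sum>i<n. \<Sum>j<n. a i * a j * K (x i) (x j) * (if F (x i) = F (x j) then 1 else 0))"
proof -
  let ?V = "F ` x ` {..<n}"
  have fin: "finite ?V" by (intro finite_imageI finite_lessThan)
  have ind: "(if F (x i) = F (x j) then 1 else 0 :: real) =
     (\<Sum>v\<in>?V. (if F (x i) = v then 1 else 0) * (if F (x j) = v then 1 else 0))" if "i < n" for i j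
  proof -
    have "(\<Sum>v\<in>?V. (if F (x i) = v then 1 else 0) * (if F (x j) = v then 1 else 0 :: real))
       = (\<Sum>v\<in>?V. if v = F (x i) then (if F (x j) = v then 1 else 0) else 0)"
      by (rule sum.cong) auto
    also have "\<dots> = (if F (x j) = F (x i) then 1 else 0)" using that by (simp add: sum.delta)
    finally show ?thesis by auto
  qed
  have t: "a i * a j * K (x i) (x j) * (if F (x i) = F (x j) then 1 else 0)
     = (\<Sum>v\<in>?V. (a i * (if F (x i) = v then 1 else 0)) * (a j * (if F (x j) = v then 1 else 0)) * K (x i) (x j))"
    if "i < n" for i j
    unfolding ind[OF that] sum_distrib_left by (rule sum.cong[OF refl]) (simp add: ac_simps)
  have "(\<Sum>i<n. \<Sum>j<n. a i * a j * K (x i) (x j) * (if F (x i) = F (x j) then 1 else 0))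
     = (\<Sum>i<n. \<Sum>j<n. \<Sum>v\<in>?V. (a i * (if F (x i) = v then 1 else 0)) * (a j * (if F (x j) = v then 1 else 0)) * K (x i) (x j))"
    by (rule sum.cong[OF refl], rule sum.cong[OF refl], rule t) simp
  also have "\<dots> = (\<Sum>i<n. \<Sum>v\<in>?V. \<Sum>j<n. (a i * (if F (x i) = v then 1 else 0)) * (a j * (if F (x j) = v then 1 else 0)) * K (x i) (x j))"
    by (rule sum.cong[OF refl], rule sum.swap)
  also have "\<dots> = (\<Sum>v\<in>?V. \<Sum>i<n. \<Sum>j<n. (a i * (if F (x i) = v then 1 else 0)) * (a j * (if F (x j) = v then 1 else 0)) * K (x i) (x j))"
    by (rule sum.swap)
  also have "\<dots> \<ge> 0" by (rule sum_nonneg) (rule hK)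
  finally show ?thesis .
qed

lemma step:
  fixes K :: "'v list \<Rightarrow> 'v list \<Rightarrow> real" and n :: nat
  assumes hK: "\<And>(n::nat) x a. 0 \<le> (\<Sum>i<n. \<Sum>j<n. a i * a j * K (x i) (x j))"
  shows "0 \<le> (\<Sum>i<n. \<Sum>j<n. a i * a j * (K (x i) (x j) * sim p Out e (x i) (x j)))"
proof -
  have "(\<Sum>i<n. \<Sum>j<n. a i * a j * (K (x i) (x j) * sim p Out e (x i) (x j)))
      = (\<Sum>i<n. \<Sum>j<n. measure_pmf.expectation p (\<lambda>t. a i * a j * K (x i) (x j) * agree_frac Out e (x i) (x j) t))"
    by (simp add: sim_def mult.assoc)
  also have "\<dots> = measure_pmf.expectation p (\<lambda>t. \<Sum>i<n. \<Sum>j<n. a i * a j * K (x i) (x j) * agree_frac Out e (x i) (x j) t)"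
    by (subst Bochner_Integration.integral_sum, simp add: af_int,
        subst Bochner_Integration.integral_sum, auto simp: af_int)
  also have "\<dots> \<ge> 0"
  proof (rule Bochner_Integration.integral_nonneg)
    fix t
    have "(\<Sum>i<n. \<Sum>j<n. a i * a j * K (x i) (x j) * agree_frac Out e (x i) (x j) t)
      = (1 / real (length t)) * (\<Sum>k\<in>{1..length t}. \<Sum>i<n. \<Sum>j<n. a i * a j * K (x i) (x j) *
          (if (\<lambda>c. Out e c t ! (k - 1)) (x i) = (\<lambda>c. Out e c t ! (k - 1)) (x j) then 1 else 0))"
    proof -
      have pt: "a i * a j * K (x i) (x j) * agree_frac Out e (x i) (x j) t =
         (1 / real (length t)) * (\<Sum>k\<in>{1..length t}. a i * a j * K (x i) (x j) *
          (if Out e (x i) t ! (k - 1) = Out e (x j) t ! (k - 1) then 1 else 0))" for i j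
        unfolding agree_frac_def sum_distrib_left[symmetric] by (simp only: mult_ac)
      have "(\<Sum>i<n. \<Sum>j<n. a i * a j * K (x i) (x j) * agree_frac Out e (x i) (x j) t)
        = (\<Sum>i<n. \<Sum>j<n. (1 / real (length t)) * (\<Sum>k\<in>{1..length t}. a i * a j * K (x i) (x j) *
          (if Out e (x i) t ! (k - 1) = Out e (x j) t ! (k - 1) then 1 else 0)))"
        by (simp only: pt)
      also have "\<dots> = (1 / real (length t)) * (\<Sum>i<n. \<Sum>j<n. \<Sum>k\<in>{1..length t}. a i * a j * K (x i) (x j) *
          (if Out e (x i) t ! (k - 1) = Out e (x j) t ! (k - 1) then 1 else 0))"
        by (simp only: sum_distrib_left)
      also have "(\<Sum>i<n. \<Sum>j<n. \<Sum>k\<in>{1..length t}. a i * a j * K (x i) (x j) *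
          (if Out e (x i) t ! (k - 1) = Out e (x j) t ! (k - 1) then 1 else 0))
        = (\<Sum>i<n. \<Sum>k\<in>{1..length t}. \<Sum>j<n. a i * a j * K (x i) (x j) *
          (if Out e (x i) t ! (k - 1) = Out e (x j) t ! (k - 1) then 1 else 0))"
        by (rule sum.cong[OF refl], rule sum.swap)
      also have "\<dots> = (\<Sum>k\<in>{1..length t}. \<Sum>i<n. \<Sum>j<n. a i * a j * K (x i) (x j) *
          (if Out e (x i) t ! (k - 1) = Out e (x j) t ! (k - 1) then 1 else 0))"
        by (rule sum.swap)
      finally show ?thesis by simp
    qed
    also have "\<dots> \<ge> 0"
      by (rule mult_nonneg_nonneg, simp, rule sum_nonneg, rule eqker, rule hK)
    finally show "0 \<le> (\<Sum>i<n. \<Sum>j<n. a i * a j * K (x i) (x j) * agree_frac Out e (x i) (x j) t)" .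
  qed
  finally show ?thesis .
qed

lemma psd_pow: "0 \<le> (\<Sum>i<(n::nat). \<Sum>j<n. a i * a j * sim_pow s p Out e (x i) (x j))"
proof (induction s arbitrary: n x a)
  case 0
  have "(\<Sum>i<n. \<Sum>j<n. a i * a j * sim_pow 0 p Out e (x i) (x j)) = (\<Sum>i<n. a i)^2"
    by (simp add: sim_pow_def power2_eq_square sum_product)
  thus ?case by simp
next
  case (Suc s)
  show ?case using step[of "sim_pow s p Out e", OF Suc.IH]
    by (simp add: sim_pow_def mult_ac)
qed


lemma sim_bounds: "0 \<le> sim p Out e c1 c2 \<and> sim p Out e c1 c2 \<le> 1"
proof
  show "0 \<le> sim p Out e c1 c2" unfolding sim_def
    by (rule Bochner_Integration.integral_nonneg) (metis af_bounds)
  have "sim p Out e c1 c2 \<le> measure_pmf.expectation p (\<lambda>_. 1::real)" unfolding sim_def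
    by (rule integral_mono) (auto simp: af_int af_bounds)
  thus "sim p Out e c1 c2 \<le> 1" by simp
qed

lemma lim_part:
  fixes p :: "('v::finite) list pmf"
  assumes suites_nonempty: "\<And>t. t \<in> set_pmf p \<Longrightarrow> length t \<ge> 1"
    and output_length: "\<And>c t. length (Out e c t) = length t"
  shows "(\<lambda>s. sim_pow s p Out e c1 c2) \<longlonglongrightarrow> sim_inf p Out e c1 c2"
proof (cases "\<forall>t. pmf p t > 0 \<longrightarrow> Out e c1 t = Out e c2 t")
  case True
  have "sim p Out e c1 c2 = measure_pmf.expectation p (\<lambda>_. 1::real)" unfolding sim_def
  proof (rule integral_cong_AE)
    show "AE t in measure_pmf p. agree_frac Out e c1 c2 t = 1"
    proof (rule AE_pmfI)
      fix t assume t: "t \<in> set_pmf p"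
      hence "Out e c1 t = Out e c2 t" using True by (simp add: pmf_positive)
      moreover have "length t \<ge> 1" using suites_nonempty t by simp
      ultimately show "agree_frac Out e c1 c2 t = 1" by (simp add: agree_frac_def Suc_le_eq)
    qed
  qed auto
  hence "sim p Out e c1 c2 = 1" by simp
  thus ?thesis using True by (simp add: sim_pow_def sim_inf_def)
next
  case False
  then obtain t0 where pt: "pmf p t0 > 0" and ne: "Out e c1 t0 \<noteq> Out e c2 t0" by blast
  have "\<exists>k<length t0. Out e c1 t0 ! k \<noteq> Out e c2 t0 ! k"
    using ne by (metis nth_equalityI output_length)
  then obtain k where k: "k < length t0" "Out e c1 t0 ! k \<noteq> Out e c2 t0 ! k" by blast
  let ?g = "\<lambda>k. if Out e c1 t0 ! (k - 1) = Out e c2 t0 ! (k - 1) then 1 else 0 :: real"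
  have "(\<Sum>k\<in>{1..length t0}. ?g k) < (\<Sum>k\<in>{1..length t0}. 1)"
    by (rule sum_strict_mono_ex1) (use k in \<open>auto intro!: bexI[of _ "Suc k"]\<close>)
  moreover have "length t0 > 0" using k(1) by linarith
  hence "real (length t0) > 0" by simp
  ultimately have "agree_frac Out e c1 c2 t0 < 1" by (simp add: agree_frac_def divide_less_eq)
  define d where "d = 1 - agree_frac Out e c1 c2 t0"
  have d: "d > 0" using \<open>agree_frac Out e c1 c2 t0 < 1\<close> by (simp add: d_def)
  have int1: "integrable (measure_pmf p) (\<lambda>t. 1 - agree_frac Out e c1 c2 t)"
    using af_int[of p Out e c1 c2] by simp
  have "measure_pmf.expectation p (\<lambda>t. d * indicator {t0} t) \<le> measure_pmf.expectation p (\<lambda>t. 1 - agree_frac Out e c1 c2 t)"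
  proof (rule integral_mono)
    show "integrable (measure_pmf p) (\<lambda>t. d * indicator {t0} t)"
      by (intro integrable_mult_right integrable_real_indicator) (simp_all add: less_top[symmetric])
    show "integrable (measure_pmf p) (\<lambda>t. 1 - agree_frac Out e c1 c2 t)" by (rule int1)
    fix t show "d * indicator {t0} t \<le> 1 - agree_frac Out e c1 c2 t"
      using af_bounds[of Out e c1 c2 t] by (auto simp: indicator_def d_def)
  qed
  moreover have "measure_pmf.expectation p (\<lambda>t. d * indicator {t0} t) = d * pmf p t0"
    by (simp add: measure_pmf_single)
  moreover have "measure_pmf.expectation p (\<lambda>t. 1 - agree_frac Out e c1 c2 t) = 1 - sim p Out e c1 c2"
    unfolding sim_def using af_int by (subst Bochner_Integration.integral_diff) auto
  ultimately have "d * pmf p t0 \<le> 1 - sim p Out e c1 c2" by (simp add: measure_pmf_single)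
  moreover have "d * pmf p t0 > 0" using d pt by simp
  ultimately have lt: "sim p Out e c1 c2 < 1" by simp
  have "(\<lambda>s. sim p Out e c1 c2 ^ s) \<longlonglongrightarrow> 0"
    by (rule LIMSEQ_power_zero) (use lt sim_bounds[of p Out e c1 c2] in simp)
  thus ?thesis unfolding sim_pow_def sim_inf_def if_not_P[OF False] .
qed

theorem proposition4p4:
  fixes p :: "('v::finite) list pmf"
    and Out :: "'e \<Rightarrow> 'v list \<Rightarrow> 'v list \<Rightarrow> 'o list"
    and e :: 'e
  assumes suites_nonempty: "\<And>t. t \<in> set_pmf p \<Longrightarrow> length t \<ge> 1"
    and output_length: "\<And>c t. length (Out e c t) = length t"
  shows "(\<forall>s::nat. psd_kernel (UNIV :: 'v list set) (sim_pow s p Out e))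
       \<and> (\<forall>c1 c2. (\<lambda>s. sim_pow s p Out e c1 c2) \<longlonglongrightarrow> sim_inf p Out e c1 c2)"
proof (intro conjI allI)
  fix s :: nat
  have sym: "sim p Out e c1 c2 = sim p Out e c2 c1" for c1 c2
  proof -
    have "agree_frac Out e c1 c2 t = agree_frac Out e c2 c1 t" for t
      unfolding agree_frac_def by (rule arg_cong[where f="\<lambda>x. _ * x"], rule sum.cong) auto
    hence "agree_frac Out e c1 c2 = agree_frac Out e c2 c1" by (rule ext)
    thus ?thesis unfolding sim_def by simp
  qed
  show "psd_kernel (UNIV :: 'v list set) (sim_pow s p Out e)"
    unfolding psd_kernel_def
  proof (intro conjI ballI allI impI)
    fix x y show "sim_pow s p Out e x y = sim_pow s p Out e y x" by (simp add: sim_pow_def sym[of x y])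
  next
    fix n :: nat and x a show "0 \<le> (\<Sum>i<n. \<Sum>j<n. a i * a j * sim_pow s p Out e (x i) (x j))" using psd_pow[where n=n and a=a and x=x and s=s and p=p and Out=Out and e=e] .
  qed
next
  fix c1 c2
  show "(\<lambda>s. sim_pow s p Out e c1 c2) \<longlonglongrightarrow> sim_inf p Out e c1 c2"
    by (rule lim_part) (use assms in auto)
qed

end
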